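(* Let $n\geq 3$ and let $\ast_n$ be the star graph. Then for every subgroup $G$ of $Homeo(\ast_n)$ we have $h(G,\ast_n)\geq 2$; moreover $h(Homeo(\ast_n),\ast_n)=2$.
   Context: For $n\geq 3$, the star graph $\ast_n$ is the topological graph with $n+1$ vertices $0,1,\ldots,n$ and $n$ edges $[0,1],[0,2],\ldots,[0,n]$, i.e. the union of $n$ arcs, the $i$-th having end points $0$ and $i$, any two of which meet only at the common end point $0$. For a topological space $A$, $Homeo(A)$ denotes the group of all homeomorphisms $A\to A$ under composition. For a subgroup $G$ of $Homeo(A)$ (acting by $gx=g(x)$), a nonempty subset $Y\subseteq A$ is invariant if $g(y)\in Y$ for all $g\in G$, $y\in Y$. The height of $(G,A)$ is $h(G,A)=\sup\{n\geq 0:$ there exist distinct closed invariant subsets $Y_0\subset Y_1\subset\cdots\subset Y_n=A\}$ (possibly $+\infty$). *)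

theory Defs
  imports "HOL-Analysis.Analysis" "HOL-Library.Extended_Nat"
begin

text \<open>The star graph with n edges, realised concretely in the plane as the union of
 the n straight segments from the centre 0 to the n-th roots of unity; the i-th edge
 is the segment [0, cis(2 pi i / n)].\<close>
definition star_graph :: "nat \<Rightarrow> complex set" where
  "star_graph n = (\<Union>i\<in>{1..n}. closed_segment 0 (cis (2 * pi * real i / real n)))"

text \<open>Homeo(A): homeomorphisms A \<rightarrow> A, normalised to be the identity outside A
 so that each homeomorphism has a unique representative as a HOL function.\<close>
definition Homeo :: "'a::topological_space set \<Rightarrow> ('a \<Rightarrow> 'a) set" where
  "Homeo A = {f. (\<exists>g. homeomorphism A A f g) \<and> (\<forall>x. x \<notin> A \<longrightarrow> f x = x)}"

definition homeo_subgroup :: "('a \<Rightarrow> 'a) set \<Rightarrow> 'a::topological_space set \<Rightarrow> bool" where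
  "homeo_subgroup G A \<longleftrightarrow> G \<subseteq> Homeo A \<and> id \<in> G \<and>
     (\<forall>f\<in>G. \<forall>g\<in>G. f \<circ> g \<in> G) \<and> (\<forall>f\<in>G. \<exists>g\<in>G. g \<circ> f = id)"

definition invariant_set :: "('a \<Rightarrow> 'a) set \<Rightarrow> 'a set \<Rightarrow> 'a set \<Rightarrow> bool" where
  "invariant_set G A Y \<longleftrightarrow> Y \<noteq> {} \<and> Y \<subseteq> A \<and> (\<forall>g\<in>G. \<forall>y\<in>Y. g y \<in> Y)"

definition closed_invariant :: "('a \<Rightarrow> 'a) set \<Rightarrow> 'a::topological_space set \<Rightarrow> 'a set \<Rightarrow> bool" where
  "closed_invariant G A Y \<longleftrightarrow> invariant_set G A Y \<and> closedin (top_of_set A) Y"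

definition height :: "('a \<Rightarrow> 'a) set \<Rightarrow> 'a::topological_space set \<Rightarrow> enat" where
  "height G A = Sup {enat k | k. \<exists>Y :: nat \<Rightarrow> 'a set.
      (\<forall>i\<le>k. closed_invariant G A (Y i)) \<and> (\<forall>i<k. Y i \<subset> Y (Suc i)) \<and> Y k = A}"

end

theory Submission
  imports Defs
begin



locale star = fixes n :: nat assumes n3: "n \<ge> 3"
begin

definition w :: "nat \<Rightarrow> complex" where "w k = cis (2 * pi * real k / real n)"
definition seg :: "nat \<Rightarrow> complex set" where "seg k = closed_segment 0 (w k)"

lemma npos: "n > 0" using n3 by simp

lemma A_eq: "star_graph n = (\<Union>k\<in>{1..n}. seg k)"
  by (simp add: star_graph_def seg_def w_def)

lemma norm_w[simp]: "norm (w k) = 1" by (simp add: w_def)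

lemma seg_param: "seg k = {complex_of_real t * w k | t. 0 \<le> t \<and> t \<le> 1}"
  by (auto simp: seg_def closed_segment_def scaleR_conv_of_real)

lemma w_add: "w a * w b = w (a + b)"
  by (simp add: w_def cis_mult add_divide_distrib distrib_left)

lemma w_mult_n: "w (a * n) = 1"
proof -
  have "2 * pi * real (a * n) / real n = 2 * pi * real a" using npos by simp
  then show ?thesis unfolding w_def by (simp add: Ints_of_nat)
qed

lemma w_mod: "w k = w (k mod n)"
proof -
  have "k = (k div n) * n + k mod n" by simp
  then have "w k = w ((k div n) * n) * w (k mod n)" by (metis w_add)
  then show ?thesis by (simp add: w_mult_n)
qed

lemma w_red: "\<exists>k'\<in>{1..n}. w k = w k'"
proof (cases "k mod n = 0")
  case True
  then have "w k = w (1 * n)" using w_mod w_mult_n by (metis mult_0)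
  then show ?thesis using npos by (intro bexI[of _ n]) auto
next
  case False
  then show ?thesis using w_mod[of k] npos
    by (intro bexI[of _ "k mod n"]) (auto simp: Suc_le_eq)
qed

lemma w_inj: assumes "j \<in> {1..n}" "k \<in> {1..n}" "w j = w k" shows "j = k"
proof (rule ccontr)
  assume ne: "j \<noteq> k"
  have "w (j + (n - k)) = w k * w (n - k)" using assms(3) by (metis w_add)
  also have "\<dots> = w n" using assms(2) by (simp add: w_add)
  also have "\<dots> = 1" using w_mult_n[of 1] by simp
  finally have "w (j + (n - k)) = 1" .
  then have "cos (2 * pi * real (j + (n - k)) / real n) = 1"
    unfolding w_def by (metis cis.simps(1) one_complex.simps(1))
  then obtain m :: int where m: "2 * pi * real (j + (n - k)) / real n = real_of_int m * 2 * pi"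
    using cos_one_2pi_int by blast
  then have h: "pi * (2 * real (j + (n - k))) = pi * (2 * (real_of_int m * real n))"
    using npos by (simp add: field_simps)
  then have "real (j + (n - k)) = m * real n"
    by (metis mult_cancel_left pi_neq_zero zero_neq_numeral)
  then have eq: "int (j + (n - k)) = m * int n"
    by (metis of_int_eq_iff of_int_of_nat_eq of_int_mult)
  have lo: "0 < int (j + (n - k))" "int (j + (n - k)) < 2 * int n"
    using assms(1,2) by auto
  have "m = 1"
  proof -
    have "0 < m * int n" "m * int n < 2 * int n" using lo eq by simp_all
    then have "m > 0" "m < 2" using npos by (simp_all add: zero_less_mult_iff mult_less_cancel_right)
    then show ?thesis by simp
  qed
  then have "j + (n - k) = n" using eq by simp
  then show False using ne assms by auto
qed

lemma seg_mem: "z \<in> seg k \<longleftrightarrow> (\<exists>t. 0 \<le> t \<and> t \<le> 1 \<and> z = complex_of_real t * w k)"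
  by (auto simp: seg_param)

lemma norm_tw: "0 \<le> t \<Longrightarrow> norm (complex_of_real t * w k) = t"
  by (simp add: norm_mult)

lemma seg_norm_le: "z \<in> seg k \<Longrightarrow> norm z \<le> 1"
  by (auto simp: seg_mem norm_tw)

lemma seg_eq_norm: "z \<in> seg k \<Longrightarrow> z = complex_of_real (norm z) * w k"
  by (auto simp: seg_mem norm_tw)

lemma seg_same_norm: "z \<in> seg k \<Longrightarrow> z' \<in> seg k \<Longrightarrow> norm z = norm z' \<Longrightarrow> z = z'"
  by (metis seg_eq_norm)

lemma zero_seg[simp]: "0 \<in> seg k" by (simp add: seg_def)
lemma w_seg[simp]: "w k \<in> seg k" by (simp add: seg_def)

lemma seg_inter: assumes "j \<in> {1..n}" "k \<in> {1..n}" "j \<noteq> k" "z \<in> seg j" "z \<in> seg k"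
  shows "z = 0"
proof (rule ccontr)
  assume z: "z \<noteq> 0"
  have "z = complex_of_real (norm z) * w j" "z = complex_of_real (norm z) * w k"
    using assms seg_eq_norm by blast+
  then have "w j = w k" using z by (metis mult_cancel_left of_real_eq_0_iff norm_eq_zero)
  then show False using w_inj assms by blast
qed

lemma A_mem: "z \<in> star_graph n \<longleftrightarrow> (\<exists>k\<in>{1..n}. z \<in> seg k)"
  by (simp add: A_eq)

lemma A_norm_le: "z \<in> star_graph n \<Longrightarrow> norm z \<le> 1"
  using A_mem seg_norm_le by blast

lemma zero_A[simp]: "0 \<in> star_graph n" using A_mem n3 by (auto intro: bexI[of _ 1])

lemma seg_sub_A: "k \<in> {1..n} \<Longrightarrow> seg k \<subseteq> star_graph n" using A_mem by blast

lemma closed_A: "closed (star_graph n)"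
  unfolding A_eq seg_def by (intro closed_UN) auto

lemma connected_seg: "connected (seg k)" by (simp add: seg_def)

lemma connected_ray: "is_interval S \<Longrightarrow> connected ((\<lambda>t::real. complex_of_real t * w k) ` S)"
  by (intro connected_continuous_image continuous_intros) (simp add: is_interval_connected)


lemma ray_eq: "{z\<in>seg k. P (norm z)} = (\<lambda>t. complex_of_real t * w k) ` {t. 0 \<le> t \<and> t \<le> 1 \<and> P t}"
  by (auto simp: seg_mem norm_tw)

context
  fixes i x
  assumes i: "i \<in> {1..n}" and x: "x \<in> seg i" "x \<noteq> 0"
begin

definition "PP = {z\<in>seg i. norm z > norm x}"
definition "RR = (\<Union>k\<in>{1..n}-{i}. seg k) \<union> {z\<in>seg i. norm z < norm x}"

lemma split_eq: "star_graph n - {x} = PP \<union> RR"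
proof
  show "star_graph n - {x} \<subseteq> PP \<union> RR"
  proof
    fix z assume z: "z \<in> star_graph n - {x}"
    then obtain k where k: "k \<in> {1..n}" "z \<in> seg k" using A_mem by auto
    show "z \<in> PP \<union> RR"
    proof (cases "k = i")
      case True
      then have "norm z \<noteq> norm x" using seg_same_norm x k z by blast
      then show ?thesis using True k by (auto simp: PP_def RR_def)
    next
      case False then show ?thesis using k by (auto simp: RR_def)
    qed
  qed
  show "PP \<union> RR \<subseteq> star_graph n - {x}"
  proof
    fix z assume z: "z \<in> PP \<union> RR"
    have "z \<in> star_graph n" using z i by (auto simp: PP_def RR_def A_mem)
    moreover have "z \<noteq> x"
    proof
      assume zx: "z = x"
      then have "z \<notin> PP" "z \<notin> {z\<in>seg i. norm z < norm x}" by (auto simp: PP_def)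
      then have "z \<in> (\<Union>k\<in>{1..n}-{i}. seg k)" using z unfolding RR_def by blast
      then obtain k where "k \<in> {1..n}-{i}" "z \<in> seg k" by blast
      then have "z = 0" using seg_inter[of k i z] i x zx by auto
      then show False using zx x by simp
    qed
    ultimately show "z \<in> star_graph n - {x}" by simp
  qed
qed

lemma split_disj: "PP \<inter> RR = {}"
proof -
  { fix z assume z: "z \<in> PP" "z \<in> RR"
    then have zi: "z \<in> seg i" "norm z > norm x" by (auto simp: PP_def)
    then have "z \<noteq> 0" by auto
    moreover have "z \<in> (\<Union>k\<in>{1..n}-{i}. seg k)" using z zi unfolding RR_def by auto
    then obtain k where "k \<in> {1..n}-{i}" "z \<in> seg k" by blast
    ultimately have False using seg_inter[of k i z] i zi by auto }
  then show ?thesis by blast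
qed

lemma conn_PP: "connected PP"
  unfolding PP_def ray_eq by (rule connected_ray) (auto simp: is_interval_def)

lemma zero_RR: "0 \<in> RR" using x by (auto simp: RR_def)

lemma conn_RR: "connected RR"
proof -
  have "RR = \<Union>(insert {z\<in>seg i. norm z < norm x} (seg ` ({1..n}-{i})))"
    by (auto simp: RR_def)
  also have "connected \<dots>"
  proof (rule connected_Union)
    show "\<Inter>(insert {z\<in>seg i. norm z < norm x} (seg ` ({1..n}-{i}))) \<noteq> {}"
    proof -
      have "0 \<in> \<Inter>(insert {z\<in>seg i. norm z < norm x} (seg ` ({1..n}-{i})))"
        using x by auto
      then show ?thesis by blast
    qed
    fix S assume "S \<in> insert {z\<in>seg i. norm z < norm x} (seg ` ({1..n}-{i}))"
    moreover have cL: "connected {z\<in>seg i. norm z < norm x}"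
      unfolding ray_eq[of i "\<lambda>t. t < norm x"] by (rule connected_ray) (auto simp: is_interval_def)
    ultimately show "connected S" using connected_seg by auto
  qed
  finally show ?thesis .
qed

lemma PP_closed: "PP = (star_graph n - {x}) \<inter> {z\<in>seg i. norm z \<ge> norm x}"
  using split_eq seg_same_norm[OF _ x(1)] by (auto simp: PP_def)

lemma RR_closed: "RR = (star_graph n - {x}) \<inter> ((\<Union>k\<in>{1..n}-{i}. seg k) \<union> {z\<in>seg i. norm z \<le> norm x})"
proof -
  have "RR \<subseteq> star_graph n - {x}" using split_eq by blast
  moreover have "(star_graph n - {x}) \<inter> {z\<in>seg i. norm z \<ge> 0 \<and> norm z \<le> norm x} \<subseteq> RR"
  proof
    fix z assume z: "z \<in> (star_graph n - {x}) \<inter> {z\<in>seg i. norm z \<ge> 0 \<and> norm z \<le> norm x}"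
    then have "norm z \<noteq> norm x" using seg_same_norm[OF _ x(1)] by blast
    then show "z \<in> RR" using z by (auto simp: RR_def)
  qed
  moreover have "RR \<subseteq> (\<Union>k\<in>{1..n}-{i}. seg k) \<union> {z\<in>seg i. norm z \<le> norm x}"
    by (auto simp: RR_def)
  moreover have "(\<Union>k\<in>{1..n}-{i}. seg k) \<subseteq> RR" by (auto simp: RR_def)
  ultimately show ?thesis by auto
qed

end

end



definition Q3 :: "'a::topological_space set \<Rightarrow> 'a \<Rightarrow> bool" where
  "Q3 A x \<longleftrightarrow> (\<exists>U1 U2 U3. openin (top_of_set A) U1 \<and> openin (top_of_set A) U2 \<and>
     openin (top_of_set A) U3 \<and> U1 \<noteq> {} \<and> U2 \<noteq> {} \<and> U3 \<noteq> {} \<and>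
     U1 \<inter> U2 = {} \<and> U1 \<inter> U3 = {} \<and> U2 \<inter> U3 = {} \<and> U1 \<union> U2 \<union> U3 = A - {x})"

lemma conn_in_one:
  assumes "connected C" "C \<subseteq> A" "openin (top_of_set A) U" "openin (top_of_set A) V"
    "U \<inter> V = {}" "C \<subseteq> U \<union> V"
  shows "C \<subseteq> U \<or> C \<subseteq> V"
proof -
  obtain T1 where T1: "open T1" "U = A \<inter> T1" using assms(3) by (auto simp: openin_open)
  obtain T2 where T2: "open T2" "V = A \<inter> T2" using assms(4) by (auto simp: openin_open)
  have "openin (top_of_set C) (C \<inter> T1)" "openin (top_of_set C) (C \<inter> T2)"
    using T1 T2 by (auto intro: openin_open_Int)
  moreover have "C \<inter> T1 = C \<inter> U" "C \<inter> T2 = C \<inter> V" using T1 T2 assms(2) by auto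
  ultimately have "openin (top_of_set C) (C \<inter> U)" "openin (top_of_set C) (C \<inter> V)" by simp_all
  then have "\<not> (C \<subseteq> (C \<inter> U) \<union> (C \<inter> V) \<and> (C \<inter> U) \<inter> (C \<inter> V) = {} \<and> C \<inter> U \<noteq> {} \<and> C \<inter> V \<noteq> {})"
    using assms(1) unfolding connected_openin by blast
  then show ?thesis using assms(5,6) by blast
qed

lemma conn_in_three:
  assumes "connected C" "C \<subseteq> A" "openin (top_of_set A) U1" "openin (top_of_set A) U2"
    "openin (top_of_set A) U3" "U1 \<inter> U2 = {}" "U1 \<inter> U3 = {}" "U2 \<inter> U3 = {}" "C \<subseteq> U1 \<union> U2 \<union> U3"
  shows "C \<subseteq> U1 \<or> C \<subseteq> U2 \<or> C \<subseteq> U3"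
proof -
  have "C \<subseteq> U1 \<or> C \<subseteq> U2 \<union> U3"
    using conn_in_one[OF assms(1,2,3) openin_Un[OF assms(4,5)]] assms by blast
  moreover have "C \<subseteq> U2 \<union> U3 \<Longrightarrow> C \<subseteq> U2 \<or> C \<subseteq> U3"
    using conn_in_one[OF assms(1,2,4,5)] assms by blast
  ultimately show ?thesis by blast
qed

lemma Q3_homeo:
  assumes h: "homeomorphism A A f g" and x: "x \<in> A" and q: "Q3 A x"
  shows "Q3 A (f x)"
proof -
  obtain U1 U2 U3 where U: "openin (top_of_set A) U1" "openin (top_of_set A) U2"
     "openin (top_of_set A) U3" "U1 \<noteq> {}" "U2 \<noteq> {}" "U3 \<noteq> {}"
     "U1 \<inter> U2 = {}" "U1 \<inter> U3 = {}" "U2 \<inter> U3 = {}" "U1 \<union> U2 \<union> U3 = A - {x}"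
    using q unfolding Q3_def by blast
  have inj: "inj_on f A" using h by (metis homeomorphism_def inj_on_inverseI)
  have fA: "f ` A = A" using h by (simp add: homeomorphism_def)
  have sub: "U1 \<subseteq> A" "U2 \<subseteq> A" "U3 \<subseteq> A" using U(10) by auto
  have "f ` U1 \<inter> f ` U2 = {}" "f ` U1 \<inter> f ` U3 = {}" "f ` U2 \<inter> f ` U3 = {}"
    using inj sub U(7,8,9) by (metis image_empty inj_on_image_Int)+
  moreover have "f ` U1 \<union> f ` U2 \<union> f ` U3 = A - {f x}"
  proof -
    have "f ` U1 \<union> f ` U2 \<union> f ` U3 = f ` (A - {x})" using U(10) by (metis image_Un)
    also have "\<dots> = f ` A - f ` {x}" using inj x by (simp add: inj_on_image_set_diff)
    finally show ?thesis using fA by simp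
  qed
  moreover have "openin (top_of_set A) (f ` U1)" "openin (top_of_set A) (f ` U2)"
     "openin (top_of_set A) (f ` U3)" using U h homeomorphism_imp_open_map by blast+
  ultimately show ?thesis unfolding Q3_def using U(4,5,6)
    by (intro exI[of _ "f ` U1"] exI[of _ "f ` U2"] exI[of _ "f ` U3"]) auto
qed

context star begin

lemma not_Q3: assumes "x \<in> star_graph n" "x \<noteq> 0" shows "\<not> Q3 (star_graph n) x"
proof
  assume "Q3 (star_graph n) x"
  then obtain U1 U2 U3 where U: "openin (top_of_set (star_graph n)) U1" "openin (top_of_set (star_graph n)) U2"
     "openin (top_of_set (star_graph n)) U3" "U1 \<noteq> {}" "U2 \<noteq> {}" "U3 \<noteq> {}"
     "U1 \<inter> U2 = {}" "U1 \<inter> U3 = {}" "U2 \<inter> U3 = {}" "U1 \<union> U2 \<union> U3 = star_graph n - {x}"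
    unfolding Q3_def by blast
  obtain i where i: "i \<in> {1..n}" "x \<in> seg i" using assms A_mem by auto
  have eq: "star_graph n - {x} = PP i x \<union> RR i x" using split_eq[OF i(1,2) assms(2)] .
  have "PP i x \<subseteq> U1 \<or> PP i x \<subseteq> U2 \<or> PP i x \<subseteq> U3"
    by (rule conn_in_three[OF conn_PP[OF i(1,2) assms(2)] _ U(1,2,3,7,8,9)]) (use eq U(10) in auto)
  moreover have "RR i x \<subseteq> U1 \<or> RR i x \<subseteq> U2 \<or> RR i x \<subseteq> U3"
    by (rule conn_in_three[OF conn_RR[OF i(1,2) assms(2)] _ U(1,2,3,7,8,9)]) (use eq U(10) in auto)
  ultimately show False using U(4-10) eq by blast
qed

lemma Q3_zero: "Q3 (star_graph n) 0"
proof -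
  let ?A = "star_graph n"
  define U1 where "U1 = ?A - (\<Union>k\<in>{2..n}. seg k)"
  define U2 where "U2 = ?A - (seg 1 \<union> (\<Union>k\<in>{3..n}. seg k))"
  define U3 where "U3 = ?A - (seg 1 \<union> seg 2)"
  have cl: "closed (seg k)" for k by (simp add: seg_def)
  have op: "openin (top_of_set ?A) (?A - C)" if "closed C" for C
  proof -
    have "?A - C = ?A \<inter> (- C)" by auto
    then show ?thesis using that by (simp add: openin_open_Int open_Compl)
  qed
  have o: "openin (top_of_set ?A) U1" "openin (top_of_set ?A) U2" "openin (top_of_set ?A) U3"
    unfolding U1_def U2_def U3_def by (intro op closed_UN closed_Un cl finite_atLeastAtMost ballI; simp)+
  have wnot: "w j \<notin> seg k" if "j \<in> {1..n}" "k \<in> {1..n}" "j \<noteq> k" for j k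
  proof
    assume "w j \<in> seg k"
    then have "w j = 0" using seg_inter[OF that w_seg] by blast
    then show False using norm_w[of j] by simp
  qed
  have n1: "w 1 \<in> U1" unfolding U1_def using wnot[of 1] n3 seg_sub_A[of 1] by auto
  have n2: "w 2 \<in> U2" unfolding U2_def using wnot[of 2] n3 seg_sub_A[of 2] by auto
  have n3': "w 3 \<in> U3" unfolding U3_def using wnot[of 3] n3 seg_sub_A[of 3] by auto
  have cover: "\<exists>k\<in>{1..n}. z \<in> seg k" if "z \<in> ?A" for z using that A_mem by blast
  have d: "U1 \<inter> U2 = {}" "U1 \<inter> U3 = {}" "U2 \<inter> U3 = {}"
  proof -
    { fix z assume "z \<in> U1" "z \<in> U2"
      then have "z \<in> ?A" "\<forall>k\<in>{1..n}. z \<notin> seg k" unfolding U1_def U2_def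
        by (auto, metis One_nat_def atLeastAtMost_iff le_antisym not_less_eq_eq numeral_2_eq_2 numeral_3_eq_3)
      then have False using cover by blast }
    then show "U1 \<inter> U2 = {}" by blast
    { fix z assume "z \<in> U1" "z \<in> U3"
      then have "z \<in> ?A" "\<forall>k\<in>{1..n}. z \<notin> seg k" unfolding U1_def U3_def
        by (auto, metis One_nat_def atLeastAtMost_iff le_antisym not_less_eq_eq numeral_2_eq_2)
      then have False using cover by blast }
    then show "U1 \<inter> U3 = {}" by blast
    { fix z assume "z \<in> U2" "z \<in> U3"
      then have "z \<in> ?A" "\<forall>k\<in>{1..n}. z \<notin> seg k" unfolding U2_def U3_def
        by (auto, metis atLeastAtMost_iff le_antisym not_less_eq_eq numeral_2_eq_2 numeral_3_eq_3)
      then have False using cover by blast }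
    then show "U2 \<inter> U3 = {}" by blast
  qed
  have u: "U1 \<union> U2 \<union> U3 = ?A - {0}"
  proof
    show "U1 \<union> U2 \<union> U3 \<subseteq> ?A - {0}" unfolding U1_def U2_def U3_def
      using n3 zero_seg by fastforce
    show "?A - {0} \<subseteq> U1 \<union> U2 \<union> U3"
    proof
      fix z assume z: "z \<in> ?A - {0}"
      then obtain k where k: "k \<in> {1..n}" "z \<in> seg k" using cover by blast
      have oth: "z \<notin> seg j" if "j \<in> {1..n}" "j \<noteq> k" for j using seg_inter[OF k(1) that(1)] k that z by auto
      show "z \<in> U1 \<union> U2 \<union> U3"
      proof (cases "k = 1")
        case True then show ?thesis using z oth n3 unfolding U1_def by auto
      next
        case False
        show ?thesis
        proof (cases "k = 2")
          case True then show ?thesis using z oth n3 unfolding U2_def by auto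
        next
          case F2: False
          then show ?thesis using False z oth n3 k(1) unfolding U3_def by auto
        qed
      qed
    qed
  qed
  have ne: "U1 \<noteq> {}" "U2 \<noteq> {}" "U3 \<noteq> {}" using n1 n2 n3' by auto
  show ?thesis unfolding Q3_def
    by (rule exI[of _ U1], rule exI[of _ U2], rule exI[of _ U3]) (intro conjI o d u ne)
qed

end



context star begin

lemma conn_end: assumes i: "i \<in> {1..n}" shows "connected (star_graph n - {w i})"
proof -
  have ne: "w i \<noteq> 0" using norm_w[of i] by (metis norm_zero zero_neq_one)
  have "PP i (w i) = {}" by (auto simp: PP_def[OF i w_seg ne] dest: seg_norm_le)
  then have "star_graph n - {w i} = RR i (w i)" using split_eq[OF i w_seg ne] by simp
  then show ?thesis using conn_RR[OF i w_seg ne] by simp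
qed

lemma disconn: assumes "x \<in> star_graph n" "x \<noteq> 0" "norm x < 1"
  shows "\<not> connected (star_graph n - {x})"
proof
  assume c: "connected (star_graph n - {x})"
  obtain i where i: "i \<in> {1..n}" "x \<in> seg i" using assms A_mem by auto
  note ix = i(1,2) assms(2)
  have cl1: "closed {z\<in>seg i. norm x \<le> norm z}"
  proof -
    have "{z\<in>seg i. norm x \<le> norm z} = seg i \<inter> {z. norm x \<le> norm z}" by auto
    moreover have "closed {z::complex. norm x \<le> norm z}" by (intro closed_Collect_le continuous_intros)
    ultimately show ?thesis by (simp add: closed_Int seg_def)
  qed
  have cl2: "closed ((\<Union>k\<in>{1..n}-{i}. seg k) \<union> {z\<in>seg i. norm z \<le> norm x})"
  proof -
    have "{z\<in>seg i. norm z \<le> norm x} = seg i \<inter> {z. norm z \<le> norm x}" by auto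
    moreover have "closed {z::complex. norm z \<le> norm x}" by (intro closed_Collect_le continuous_intros)
    ultimately show ?thesis by (auto intro!: closed_Un closed_UN closed_Int simp: seg_def)
  qed
  have "closedin (top_of_set (star_graph n - {x})) (PP i x)"
    using PP_closed[OF ix] closedin_closed_Int[OF cl1] by (metis (no_types, lifting))
  moreover have "closedin (top_of_set (star_graph n - {x})) (RR i x)"
    using RR_closed[OF ix] closedin_closed_Int[OF cl2] by (metis (no_types, lifting))
  moreover have "w i \<in> PP i x" using assms(3) by (simp add: PP_def[OF ix])
  moreover have "0 \<in> RR i x" by (rule zero_RR[OF ix])
  ultimately show False using c split_eq[OF ix] split_disj[OF ix]
    unfolding connected_closedin by blast
qed

lemma homeo_zero: assumes "homeomorphism (star_graph n) (star_graph n) h g" shows "h 0 = 0"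
proof (rule ccontr)
  assume "h 0 \<noteq> 0"
  moreover have "h 0 \<in> star_graph n" using assms by (auto simp: homeomorphism_def)
  moreover have "Q3 (star_graph n) (h 0)" using Q3_homeo[OF assms zero_A Q3_zero] .
  ultimately show False using not_Q3 by blast
qed

lemma homeo_end: assumes h: "homeomorphism (star_graph n) (star_graph n) h g"
  and z: "z \<in> star_graph n" "norm z = 1"
  shows "norm (h z) = 1"
proof (rule ccontr)
  assume nz: "norm (h z) \<noteq> 1"
  obtain i where i: "i \<in> {1..n}" "z \<in> seg i" using z A_mem by auto
  have zw: "z = w i" using seg_eq_norm[OF i(2)] z by simp
  have inj: "inj_on h (star_graph n)" using h by (metis homeomorphism_def inj_on_inverseI)
  have hA: "h ` star_graph n = star_graph n" using h by (simp add: homeomorphism_def)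
  have hzA: "h z \<in> star_graph n" using hA z by blast
  have "h z \<noteq> 0"
  proof
    assume "h z = 0"
    then have "h z = h 0" using homeo_zero[OF h] by simp
    then have "z = 0" using inj z(1) zero_A by (meson inj_onD)
    then show False using z by simp
  qed
  moreover have "norm (h z) < 1" using nz A_norm_le[OF hzA] by simp
  moreover have "connected (star_graph n - {h z})"
  proof -
    have "h ` (star_graph n - {z}) = star_graph n - {h z}"
      using inj z(1) hA by (simp add: inj_on_image_set_diff)
    moreover have "continuous_on (star_graph n - {z}) h"
      using h by (meson Diff_subset continuous_on_subset homeomorphism_def)
    ultimately show ?thesis using conn_end[OF i(1)] zw
      by (metis connected_continuous_image)
  qed
  ultimately show False using disconn hzA by blast
qed

lemma Homeo_D: "h \<in> Homeo (star_graph n) \<Longrightarrow> \<exists>g. homeomorphism (star_graph n) (star_graph n) h g"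
  by (simp add: Homeo_def)

lemma height_ge2: assumes G: "G \<subseteq> Homeo (star_graph n)" shows "height G (star_graph n) \<ge> 2"
proof -
  let ?A = "star_graph n"
  define Y where "Y = (\<lambda>j::nat. if j = 0 then {0} else if j = 1 then ?A \<inter> insert 0 (sphere 0 1) else ?A)"
  have hom: "\<exists>g'. homeomorphism ?A ?A g g'" if "g \<in> G" for g
    using G that Homeo_D by (meson subsetD)
  have one: "1 \<in> {1..n}" using n3 by simp
  have w1: "w 1 \<in> ?A" using seg_sub_A[OF one] w_seg by (meson subsetD)
  have "complex_of_real (1/2) * w 1 \<in> seg 1" unfolding seg_mem by (rule exI[of _ "1/2"]) simp
  then have half: "complex_of_real (1/2) * w 1 \<in> ?A" using seg_sub_A[OF one] by (meson subsetD)
  have inv: "\<forall>g\<in>G. \<forall>y\<in>Y j. g y \<in> Y j" for j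
  proof (intro ballI)
    fix g y assume g: "g \<in> G" and y: "y \<in> Y j"
    obtain g' where h: "homeomorphism ?A ?A g g'" using hom[OF g] by blast
    have gA: "g y \<in> ?A" if "y \<in> ?A" using h that by (auto simp: homeomorphism_def)
    show "g y \<in> Y j"
    proof (cases "j = 0")
      case True then show ?thesis using y homeo_zero[OF h] by (simp add: Y_def)
    next
      case False
      show ?thesis
      proof (cases "j = 1")
        case True
        then have "y \<in> ?A" "y = 0 \<or> norm y = 1" using y by (auto simp: Y_def)
        then show ?thesis using True gA homeo_zero[OF h] homeo_end[OF h] by (auto simp: Y_def)
      next
        case F: False then show ?thesis using False y gA by (auto simp: Y_def)
      qed
    qed
  qed
  have ci: "closed_invariant G ?A (Y j)" for j
  proof -
    have "closedin (top_of_set ?A) (Y j)"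
    proof -
      have "closedin (top_of_set ?A) (?A \<inter> {0})" by (rule closedin_closed_Int) simp
      moreover have "closedin (top_of_set ?A) (?A \<inter> insert 0 (sphere 0 1))"
        by (rule closedin_closed_Int) (simp add: closed_insert)
      moreover have "closedin (top_of_set ?A) ?A" by simp
      moreover have "?A \<inter> {0} = {0}" by auto
      ultimately show ?thesis by (auto simp: Y_def)
    qed
    moreover have "0 \<in> Y j" using zero_A by (simp add: Y_def)
    moreover have "Y j \<subseteq> ?A" by (auto simp: Y_def)
    ultimately show ?thesis using inv unfolding closed_invariant_def invariant_set_def by auto
  qed
  have "w 1 \<in> sphere 0 1" using norm_w[of 1] by (simp only: mem_sphere_0)
  then have a: "w 1 \<in> Y 1" using w1 unfolding Y_def by simp
  have "w 1 \<noteq> 0" using norm_w[of 1] by (metis norm_zero zero_neq_one)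
  then have b: "w 1 \<notin> Y 0" by (simp add: Y_def)
  have "Y 0 \<subseteq> Y 1" by (simp add: Y_def)
  then have c0: "Y 0 \<subset> Y 1" using a b by blast
  have c1: "Y 1 \<subset> Y 2"
  proof -
    define h where "h = complex_of_real (1/2) * w 1"
    have nh: "norm h = 1/2" by (simp add: norm_mult h_def)
    then have "h \<noteq> 0" "h \<notin> sphere 0 1" by auto
    moreover have "Y 1 = ?A \<inter> insert 0 (sphere 0 1)" "Y 2 = ?A" by (simp_all add: Y_def)
    ultimately show ?thesis using half unfolding h_def[symmetric] by blast
  qed
  have chain: "\<forall>i<2. Y i \<subset> Y (Suc i)"
  proof (intro allI impI)
    fix i :: nat assume "i < 2"
    then have "i = 0 \<or> i = 1" by auto
    then show "Y i \<subset> Y (Suc i)" using c0 c1 by (metis One_nat_def Suc_1)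
  qed
  have "enat 2 \<in> {enat k | k. \<exists>Y :: nat \<Rightarrow> complex set.
      (\<forall>i\<le>k. closed_invariant G ?A (Y i)) \<and> (\<forall>i<k. Y i \<subset> Y (Suc i)) \<and> Y k = ?A}"
    using ci chain by (intro CollectI exI[of _ 2] conjI exI[of _ Y] refl) (auto simp: Y_def)
  then have "enat 2 \<le> height G ?A" unfolding height_def by (rule Sup_upper)
  then show ?thesis by (simp add: enat_numeral)
qed

end



definition normA :: "'a set \<Rightarrow> ('a \<Rightarrow> 'a) \<Rightarrow> 'a \<Rightarrow> 'a" where
  "normA A f z = (if z \<in> A then f z else z)"

lemma normA_Homeo:
  assumes "homeomorphism A A f g" shows "normA A f \<in> Homeo A"
proof -
  have "homeomorphism A A (normA A f) (normA A g)"
    by (rule homeomorphism_cong[OF assms]) (auto simp: normA_def)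
  then show ?thesis unfolding Homeo_def by (auto simp: normA_def)
qed

definition rad :: "real \<Rightarrow> complex \<Rightarrow> complex" where
  "rad p z = complex_of_real (norm z powr p / norm z) * z"

lemma norm_rad: "norm (rad p z) = norm z powr p"
proof (cases "z = 0")
  case False
  have "norm (rad p z) = \<bar>norm z powr p / norm z\<bar> * norm z"
    unfolding rad_def norm_mult norm_of_real ..
  also have "\<dots> = norm z powr p" using False by simp
  finally show ?thesis .
qed (simp add: rad_def)

lemma rad_cont: assumes p: "p > 0" shows "continuous_on UNIV (rad p)"
proof (rule continuous_at_imp_continuous_on, intro ballI)
  fix z :: complex
  show "isCont (rad p) z"
  proof (cases "z = 0")
    case True
    have "((\<lambda>x. norm x powr p) \<longlongrightarrow> 0) (at (0::complex))"
      by (rule tendsto_zero_powrI[OF tendsto_norm_zero[OF tendsto_ident_at] tendsto_const _ p]) simp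
    then have "((\<lambda>x. norm (rad p x)) \<longlongrightarrow> 0) (at (0::complex))" by (simp add: norm_rad)
    then have "(rad p \<longlongrightarrow> 0) (at 0)" by (rule tendsto_norm_zero_cancel)
    then show ?thesis using True by (simp add: isCont_def rad_def)
  next
    case False
    then have "norm z > 0" by simp
    then show ?thesis unfolding rad_def using False
      by (intro continuous_intros) auto
  qed
qed

context star begin

lemma rad_tw: "0 \<le> t \<Longrightarrow> rad p (complex_of_real t * w k) = complex_of_real (t powr p) * w k"
  by (cases "t = 0") (auto simp: rad_def norm_tw)

lemma rad_A: assumes "p > 0" "z \<in> star_graph n" shows "rad p z \<in> star_graph n"
proof -
  obtain k t where k: "k \<in> {1..n}" "0 \<le> t" "t \<le> 1" "z = complex_of_real t * w k"
    using assms A_mem seg_mem by blast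
  have "rad p z \<in> seg k" unfolding k(4) rad_tw[OF k(2)] seg_mem
    using k assms(1) by (intro exI[of _ "t powr p"]) (auto intro: powr_le1)
  then show ?thesis using seg_sub_A[OF k(1)] by blast
qed

lemma rad_inv: assumes "p > 0" "z \<in> star_graph n" shows "rad (1/p) (rad p z) = z"
proof -
  obtain k t where k: "k \<in> {1..n}" "0 \<le> t" "t \<le> 1" "z = complex_of_real t * w k"
    using assms A_mem seg_mem by blast
  have "(t powr p) powr (1/p) = t" using assms(1) k(2) by (simp add: powr_powr powr_one)
  then show ?thesis unfolding k(4) using k(2) by (simp add: rad_tw)
qed

lemma rad_homeo: assumes "p > 0"
  shows "homeomorphism (star_graph n) (star_graph n) (rad p) (rad (1/p))"
proof (rule homeomorphismI)
  have p': "1/p > 0" using assms by simp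
  show "continuous_on (star_graph n) (rad p)" using rad_cont[OF assms] by (rule continuous_on_subset) simp
  show "continuous_on (star_graph n) (rad (1/p))" using rad_cont[OF p'] by (rule continuous_on_subset) simp
  show "rad p ` star_graph n \<subseteq> star_graph n" using rad_A[OF assms] by blast
  show "rad (1/p) ` star_graph n \<subseteq> star_graph n" using rad_A[OF p'] by blast
  show "\<And>x. x \<in> star_graph n \<Longrightarrow> rad (1/p) (rad p x) = x" using rad_inv[OF assms] by blast
  show "\<And>y. y \<in> star_graph n \<Longrightarrow> rad p (rad (1/p) y) = y" using rad_inv[OF p'] by simp
qed

lemma rot_A: assumes "z \<in> star_graph n" shows "w m * z \<in> star_graph n"
proof -
  obtain k t where k: "k \<in> {1..n}" "0 \<le> t" "t \<le> 1" "z = complex_of_real t * w k"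
    using assms A_mem seg_mem by blast
  obtain k' where k': "k' \<in> {1..n}" "w (m + k) = w k'" using w_red by blast
  have "w m * z = complex_of_real t * w k'" unfolding k(4) using k'(2) w_add[of m k]
    by (simp add: mult.left_commute)
  then have "w m * z \<in> seg k'" unfolding seg_mem using k by blast
  then show ?thesis using seg_sub_A[OF k'(1)] by blast
qed

lemma rot_homeo: "homeomorphism (star_graph n) (star_graph n) ((*) (w m)) ((*) (w (m * n - m)))"
proof -
  have "m \<le> m * n" using npos by simp
  then have e: "w (m * n - m) * w m = 1" using w_add[of "m * n - m" m] w_mult_n[of m] by simp
  show ?thesis
  proof (rule homeomorphismI)
    show "continuous_on (star_graph n) ((*) (w m))" by (intro continuous_intros)
    show "continuous_on (star_graph n) ((*) (w (m * n - m)))" by (intro continuous_intros)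
    show "(*) (w m) ` star_graph n \<subseteq> star_graph n" using rot_A by blast
    show "(*) (w (m * n - m)) ` star_graph n \<subseteq> star_graph n" using rot_A by blast
    show "\<And>x. w (m * n - m) * (w m * x) = x" using e by (metis mult.assoc mult_1)
    show "\<And>y. w m * (w (m * n - m) * y) = y" using e by (metis mult.assoc mult.commute mult_1)
  qed
qed

lemma rot_to: assumes "i \<in> {1..n}" "j \<in> {1..n}" shows "w (n + j - i) * w i = w j"
proof -
  have "w (n + j - i) * w i = w (n + j)" using assms by (simp add: w_add)
  also have "\<dots> = w j" using w_add[of n j] w_mult_n[of 1] by simp
  finally show ?thesis .
qed

lemma trans_int:
  assumes y: "y \<in> star_graph n" "0 < norm y" "norm y < 1"
      and z: "z \<in> star_graph n" "0 < norm z" "norm z < 1"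
  shows "\<exists>h\<in>Homeo (star_graph n). h y = z"
proof -
  obtain i where i: "i \<in> {1..n}" "y \<in> seg i" using y A_mem by auto
  obtain j where j: "j \<in> {1..n}" "z \<in> seg j" using z A_mem by auto
  define r where "r = norm y"
  define s where "s = norm z"
  have yr: "y = complex_of_real r * w i" using seg_eq_norm[OF i(2)] r_def by simp
  have zs: "z = complex_of_real s * w j" using seg_eq_norm[OF j(2)] s_def by simp
  have lr: "ln r < 0" "ln s < 0" using y z by (simp_all add: r_def s_def)
  define p where "p = ln s / ln r"
  have p: "p > 0" using lr by (simp add: p_def divide_neg_neg)
  have rp: "r powr p = s" using y z lr by (simp add: powr_def p_def r_def s_def)
  define m where "m = n + j - i"
  have hom: "homeomorphism (star_graph n) (star_graph n) ((*) (w m) \<circ> rad p) (rad (1/p) \<circ> (*) (w (m * n - m)))"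
    by (rule homeomorphism_compose[OF rad_homeo[OF p] rot_homeo])
  have r0: "0 \<le> r" by (simp add: r_def)
  have "rad p y = complex_of_real (r powr p) * w i" unfolding yr by (rule rad_tw[OF r0])
  then have "((*) (w m) \<circ> rad p) y = complex_of_real s * (w m * w i)"
    using rp by (simp add: mult.left_commute)
  also have "\<dots> = z" unfolding zs m_def rot_to[OF i(1) j(1)] ..
  finally have "((*) (w m) \<circ> rad p) y = z" .
  then show ?thesis using normA_Homeo[OF hom] y(1)
    by (intro bexI[of _ "normA (star_graph n) ((*) (w m) \<circ> rad p)"]) (auto simp: normA_def)
qed

lemma trans_end:
  assumes y: "y \<in> star_graph n" "norm y = 1" and z: "z \<in> star_graph n" "norm z = 1"
  shows "\<exists>h\<in>Homeo (star_graph n). h y = z"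
proof -
  obtain i where i: "i \<in> {1..n}" "y \<in> seg i" using y A_mem by auto
  obtain j where j: "j \<in> {1..n}" "z \<in> seg j" using z A_mem by auto
  have yr: "y = w i" using seg_eq_norm[OF i(2)] y by simp
  have zs: "z = w j" using seg_eq_norm[OF j(2)] z by simp
  define m where "m = n + j - i"
  have "w m * y = z" unfolding yr zs m_def by (rule rot_to[OF i(1) j(1)])
  then show ?thesis using normA_Homeo[OF rot_homeo[of m]] y(1)
    by (intro bexI[of _ "normA (star_graph n) ((*) (w m))"]) (auto simp: normA_def)
qed

end



context star begin

lemma inv_full:
  assumes Y: "closed_invariant (Homeo (star_graph n)) (star_graph n) Y"
    and y: "y \<in> Y" "y \<noteq> 0" "norm y \<noteq> 1"
  shows "Y = star_graph n"
proof -
  let ?A = "star_graph n"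
  have YA: "Y \<subseteq> ?A" and inv: "\<forall>g\<in>Homeo ?A. \<forall>y\<in>Y. g y \<in> Y"
    using Y by (auto simp: closed_invariant_def invariant_set_def)
  have yA: "y \<in> ?A" using YA y by blast
  have ny: "0 < norm y" "norm y < 1" using y A_norm_le[OF yA] by auto
  have int: "z \<in> Y" if zz: "z \<in> ?A" "0 < norm z" "norm z < 1" for z
  proof -
    obtain h where "h \<in> Homeo ?A" "h y = z" using trans_int[OF yA ny zz] by blast
    then show ?thesis using inv y(1) by metis
  qed
  obtain C where C: "closed C" "Y = ?A \<inter> C" using Y by (auto simp: closed_invariant_def closedin_closed)
  have "seg k \<subseteq> C" if k: "k \<in> {1..n}" for k
  proof -
    have wne: "w k \<noteq> 0" using norm_w[of k] by (metis norm_zero zero_neq_one)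
    have "open_segment 0 (w k) \<subseteq> C"
    proof
      fix z assume z: "z \<in> open_segment 0 (w k)"
      then have zs: "z \<in> seg k" "z \<noteq> 0" "z \<noteq> w k" by (auto simp: open_segment_def seg_def)
      have "norm z \<noteq> 1" using zs seg_eq_norm[OF zs(1)] by auto
      then have "norm z < 1" using seg_norm_le[OF zs(1)] by simp
      moreover have "z \<in> ?A" using seg_sub_A[OF k] zs by blast
      ultimately have "z \<in> Y" using int zs by simp
      then show "z \<in> C" using C by blast
    qed
    then have "closure (open_segment 0 (w k)) \<subseteq> C" using C(1) by (rule closure_minimal)
    then show ?thesis using wne by (simp add: seg_def)
  qed
  then have "?A \<subseteq> C" using A_mem by blast
  then show ?thesis using C by blast
qed

lemma inv_end:
  assumes Y: "closed_invariant (Homeo (star_graph n)) (star_graph n) Y"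
    and y: "y \<in> Y" "norm y = 1"
  shows "star_graph n \<inter> sphere 0 1 \<subseteq> Y"
proof
  let ?A = "star_graph n"
  have YA: "Y \<subseteq> ?A" and inv: "\<forall>g\<in>Homeo ?A. \<forall>y\<in>Y. g y \<in> Y"
    using Y by (auto simp: closed_invariant_def invariant_set_def)
  have yA: "y \<in> ?A" using YA y by blast
  fix z assume "z \<in> ?A \<inter> sphere 0 1"
  then have z: "z \<in> ?A" "norm z = 1" by auto
  obtain h where "h \<in> Homeo ?A" "h y = z" using trans_end[OF yA y(2) z] by blast
  then show "z \<in> Y" using inv y(1) by metis
qed

lemma classify:
  assumes Y: "closed_invariant (Homeo (star_graph n)) (star_graph n) Y" and ne: "Y \<noteq> star_graph n"
  shows "Y = {0} \<or> Y = star_graph n \<inter> sphere 0 1 \<or> Y = insert 0 (star_graph n \<inter> sphere 0 1)"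
proof -
  let ?E = "star_graph n \<inter> sphere 0 1"
  have YA: "Y \<subseteq> star_graph n" "Y \<noteq> {}" using Y by (auto simp: closed_invariant_def invariant_set_def)
  have sub: "Y \<subseteq> insert 0 ?E"
  proof
    fix y assume y: "y \<in> Y"
    have "y = 0 \<or> norm y = 1" using inv_full[OF Y y] ne by blast
    then show "y \<in> insert 0 ?E" using y YA by auto
  qed
  have Ecase: "?E \<subseteq> Y" if ne': "Y \<inter> ?E \<noteq> {}"
  proof -
    obtain y where "y \<in> Y" "y \<in> ?E" using ne' by blast
    then show ?thesis using inv_end[OF Y, of y] by simp
  qed
  show ?thesis
  proof (cases "0 \<in> Y")
    case True
    then show ?thesis using sub Ecase by blast
  next
    case False
    then show ?thesis using sub Ecase YA(2) by blast
  qed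
qed

lemma height_le2: "height (Homeo (star_graph n)) (star_graph n) \<le> 2"
  unfolding height_def
proof (rule Sup_least)
  let ?A = "star_graph n"
  let ?E = "star_graph n \<inter> sphere 0 1"
  let ?F = "{{0}, ?E, insert 0 ?E}"
  fix x assume "x \<in> {enat k | k. \<exists>Y :: nat \<Rightarrow> complex set.
      (\<forall>i\<le>k. closed_invariant (Homeo ?A) ?A (Y i)) \<and> (\<forall>i<k. Y i \<subset> Y (Suc i)) \<and> Y k = ?A}"
  then obtain k Y where x: "x = enat k" and ci: "\<forall>i\<le>k. closed_invariant (Homeo ?A) ?A (Y i)"
    and ch: "\<forall>i<k. Y i \<subset> Y (Suc i)" and top: "Y k = ?A" by blast
  show "x \<le> 2"
  proof (rule ccontr)
    assume "\<not> x \<le> 2"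
    then have k3: "k \<ge> 3" using x by (simp add: numeral_eq_enat)
    define a where "a = k - 3"
    have ka: "k = Suc (Suc (Suc a))" using k3 a_def by simp
    have c1: "Y a \<subset> Y (Suc a)" "Y (Suc a) \<subset> Y (Suc (Suc a))" "Y (Suc (Suc a)) \<subset> ?A"
      using ch top ka by (metis lessI less_SucI)+
    have nA: "Y a \<noteq> ?A" "Y (Suc a) \<noteq> ?A" "Y (Suc (Suc a)) \<noteq> ?A" using c1 by blast+
    have cl: "Y a \<in> ?F" "Y (Suc a) \<in> ?F" "Y (Suc (Suc a)) \<in> ?F"
      using classify[OF _ nA(1)] classify[OF _ nA(2)] classify[OF _ nA(3)] ci ka by auto
    have w1: "w 1 \<in> ?E" using seg_sub_A[of 1] n3 by auto
    have z: "0 \<notin> ?E" by simp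
    show False using cl c1(1,2) w1 z by auto
  qed
qed

lemma homeo_subgroup_Homeo: "G = Homeo (star_graph n) \<Longrightarrow> G \<subseteq> Homeo (star_graph n)" by simp

end

theorem lemma4p1:
  fixes n :: nat
  assumes "n \<ge> 3"
  shows "(\<forall>G. homeo_subgroup G (star_graph n) \<longrightarrow> height G (star_graph n) \<ge> 2)
         \<and> height (Homeo (star_graph n)) (star_graph n) = 2"
proof -
  interpret star n using assms by unfold_locales
  have "\<forall>G. homeo_subgroup G (star_graph n) \<longrightarrow> height G (star_graph n) \<ge> 2"
    using height_ge2 by (auto simp: homeo_subgroup_def)
  moreover have "height (Homeo (star_graph n)) (star_graph n) = 2"
    using height_ge2[of "Homeo (star_graph n)"] height_le2 by simp
  ultimately show ?thesis by blast
qed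



end
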